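(* Let $\bar r>0$ and $0<\sigma_1<\frac12<\sigma_2$ be such that $\gamma(\hat\omega_{\sigma_1,y})<\frac12$ for all $y\in\mathbb{R}^3$, $\gamma(\hat\omega_{\sigma_2,y})>\frac12$ for all $|y|\le\bar r$, and $\sup\{I_0(\hat\omega_{\sigma,y}):(\sigma,y)\in\partial\mathcal{H}\}<\bar c$, where $\mathcal{H}=\{(\sigma,y):\sigma\in[\sigma_1,\sigma_2],|y|\le\bar r\}$. Then there exist $(\tilde\sigma,\tilde y)\in\partial\mathcal{H}$ and $(\bar\sigma,\bar y)$ in the interior of $\mathcal{H}$ such that $$\beta(\omega_{\tilde\sigma,\tilde y})=0,\quad\gamma(\omega_{\tilde\sigma,\tilde y})\ge\tfrac12,\qquad \beta(\omega_{\bar\sigma,\bar y})=0,\quad\gamma(\omega_{\bar\sigma,\bar y})=\tfrac12.$$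
   Context: $W,K:\mathbb{R}^3\to\mathbb{R}$ measurable with $W\ge0$, $W(x)\to0$ as $|x|\to\infty$, $W\in L^{3/2}(\mathbb{R}^3)$; $K\ge0$, $K\not\equiv0$, $K(x)\to0$, $K\in L^2(\mathbb{R}^3)$. $S=\inf\{\int|\nabla u|^2/(\int u^6)^{1/3}:u\in\mathcal{D}^{1,2}(\mathbb{R}^3)\setminus\{0\}\}$. $\phi_u\in\mathcal{D}^{1,2}$ solves $-\Delta\phi=Ku^2$. $I_0(u)=\frac12\int(|\nabla u|^2+Wu^2)+\frac14\int K\phi_uu^2-\frac16\int u^6$ on $\mathcal{D}^{1,2}$, $\mathcal{N}_0=\{u\ne0:I_0'(u)[u]=0\}$; $\beta(u)=|u|_6^{-6}\int\frac{x}{1+|x|}u^6$, $\gamma(u)=|u|_6^{-6}\int|\frac{x}{1+|x|}-\beta(u)|u^6$; $\mathcal{B}_0=\inf\{I_0(u):u\in\mathcal{N}_0,\beta(u)=0,\gamma(u)=\frac12\}$. A number $\bar c$ is fixed with $\frac13S^{3/2}<\bar c<\min\{\frac12(\mathcal{B}_0+\frac13S^{3/2}),\frac12S^{3/2}\}$ and, if $A:=(1+|W|_{3/2}/S+|K|_2^2/S^{3/2})^3(1+\frac{3}{4S}|W|_{3/2})<2$, also $\bar c<\frac23S^{3/2}A^{-1}$. $I_\infty(u)=\frac12\int|\nabla u|^2-\frac16\int u^6$, $\mathcal{N}_\infty$ its Nehari set. $\omega\in C_0^\infty(B_1(0))$ is fixed with $\omega\ge0$, $\omega\in\mathcal{N}_\infty$,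 $I_\infty(\omega)=\Sigma\in(\frac13S^{3/2},\bar c)$, radial and radially nonincreasing; $\omega_{\sigma,y}(x)=\sigma^{-1/2}\omega((x-y)/\sigma)$ on $B_\sigma(y)$, $0$ elsewhere; $\hat\omega_{\sigma,y}=t\omega_{\sigma,y}$ with $t>0$ the unique number such that $t\omega_{\sigma,y}\in\mathcal{N}_0$. $\partial\mathcal{H}$ and the interior are taken in $\mathbb{R}\times\mathbb{R}^3$. *)

theory Defs
  imports "HOL-Analysis.Analysis"
begin

type_synonym R3 = "real^3"

definition pd :: "3 \<Rightarrow> (R3 \<Rightarrow> real) \<Rightarrow> R3 \<Rightarrow> real" where
  "pd i f x = frechet_derivative f (at x) (axis i 1)"

primrec pds :: "3 list \<Rightarrow> (R3 \<Rightarrow> real) \<Rightarrow> R3 \<Rightarrow> real" where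
  "pds [] f = f"
| "pds (i # is) f = pd i (pds is f)"

definition smooth :: "(R3 \<Rightarrow> real) \<Rightarrow> bool" where
  "smooth f \<longleftrightarrow> (\<forall>is x. pds is f differentiable (at x))"

definition test_fun :: "(R3 \<Rightarrow> real) \<Rightarrow> bool" where
  "test_fun f \<longleftrightarrow> smooth f \<and> compact (closure {x. f x \<noteq> 0})"

definition weak_grad :: "(R3 \<Rightarrow> real) \<Rightarrow> (R3 \<Rightarrow> R3) \<Rightarrow> bool" where
  "weak_grad u g \<longleftrightarrow> g \<in> borel_measurable lebesgue
     \<and> integrable lebesgue (\<lambda>x. (norm (g x))\<^sup>2)
     \<and> (\<forall>\<phi> i. test_fun \<phi> \<longrightarrow>
          (LINT x|lebesgue. u x * pd i \<phi> x) = - (LINT x|lebesgue. (g x $ i) * \<phi> x))"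

definition D12 :: "(R3 \<Rightarrow> real) \<Rightarrow> bool" where
  "D12 u \<longleftrightarrow> u \<in> borel_measurable lebesgue \<and> integrable lebesgue (\<lambda>x. (u x) ^ 6)
     \<and> (\<exists>g. weak_grad u g)"

definition grad :: "(R3 \<Rightarrow> real) \<Rightarrow> R3 \<Rightarrow> R3" where
  "grad u = (SOME g. weak_grad u g)"

definition nonzero :: "(R3 \<Rightarrow> real) \<Rightarrow> bool" where
  "nonzero u \<longleftrightarrow> \<not> (AE x in lebesgue. u x = 0)"

definition S_const :: real where
  "S_const = Inf {(LINT x|lebesgue. (norm (grad u x))\<^sup>2) / (LINT x|lebesgue. (u x) ^ 6) powr (1/3)
                  | u. D12 u \<and> nonzero u}"

text \<open>phi_u: a solution in D^{1,2} of -Delta phi = K u^2 (weak formulation); any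
  representative (they agree a.e.).\<close>
definition phi :: "(R3 \<Rightarrow> real) \<Rightarrow> (R3 \<Rightarrow> real) \<Rightarrow> R3 \<Rightarrow> real" where
  "phi K u = (SOME \<phi>. D12 \<phi> \<and> (\<forall>v. D12 v \<longrightarrow>
       (LINT x|lebesgue. grad \<phi> x \<bullet> grad v x) = (LINT x|lebesgue. K x * (u x)\<^sup>2 * v x)))"

definition I0 :: "(R3 \<Rightarrow> real) \<Rightarrow> (R3 \<Rightarrow> real) \<Rightarrow> (R3 \<Rightarrow> real) \<Rightarrow> real" where
  "I0 W K u = 1/2 * (LINT x|lebesgue. (norm (grad u x))\<^sup>2 + W x * (u x)\<^sup>2)
            + 1/4 * (LINT x|lebesgue. K x * phi K u x * (u x)\<^sup>2)
            - 1/6 * (LINT x|lebesgue. (u x) ^ 6)"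

text \<open>Nehari set: I_0'(u)[u] = d/dt I_0(t u) at t = 1 equals 0.\<close>
definition N0 :: "(R3 \<Rightarrow> real) \<Rightarrow> (R3 \<Rightarrow> real) \<Rightarrow> (R3 \<Rightarrow> real) set" where
  "N0 W K = {u. D12 u \<and> nonzero u \<and>
      ((\<lambda>t. I0 W K (\<lambda>x. t * u x)) has_real_derivative 0) (at 1)}"

definition Iinf :: "(R3 \<Rightarrow> real) \<Rightarrow> real" where
  "Iinf u = 1/2 * (LINT x|lebesgue. (norm (grad u x))\<^sup>2) - 1/6 * (LINT x|lebesgue. (u x) ^ 6)"

definition Ninf :: "(R3 \<Rightarrow> real) set" where
  "Ninf = {u. D12 u \<and> nonzero u \<and> ((\<lambda>t. Iinf (\<lambda>x. t * u x)) has_real_derivative 0) (at 1)}"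

definition beta :: "(R3 \<Rightarrow> real) \<Rightarrow> R3" where
  "beta u = (1 / (LINT x|lebesgue. (u x) ^ 6)) *\<^sub>R
             (LINT x|lebesgue. ((u x) ^ 6) *\<^sub>R ((1 / (1 + norm x)) *\<^sub>R x))"

definition gamma :: "(R3 \<Rightarrow> real) \<Rightarrow> real" where
  "gamma u = (1 / (LINT x|lebesgue. (u x) ^ 6)) *
             (LINT x|lebesgue. norm ((1 / (1 + norm x)) *\<^sub>R x - beta u) * (u x) ^ 6)"

definition B0 :: "(R3 \<Rightarrow> real) \<Rightarrow> (R3 \<Rightarrow> real) \<Rightarrow> real" where
  "B0 W K = Inf (I0 W K ` {u \<in> N0 W K. beta u = 0 \<and> gamma u = 1/2})"

definition omega_sy :: "(R3 \<Rightarrow> real) \<Rightarrow> real \<Rightarrow> R3 \<Rightarrow> R3 \<Rightarrow> real" where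
  "omega_sy \<omega> \<sigma> y x = (if x \<in> ball y \<sigma> then \<sigma> powr (-1/2) * \<omega> ((1/\<sigma>) *\<^sub>R (x - y)) else 0)"

definition omega_hat :: "(R3 \<Rightarrow> real) \<Rightarrow> (R3 \<Rightarrow> real) \<Rightarrow> (R3 \<Rightarrow> real) \<Rightarrow> real \<Rightarrow> R3 \<Rightarrow> R3 \<Rightarrow> real" where
  "omega_hat W K \<omega> \<sigma> y x =
     (THE t. t > 0 \<and> (\<lambda>z. t * omega_sy \<omega> \<sigma> y z) \<in> N0 W K) * omega_sy \<omega> \<sigma> y x"

definition Hset :: "real \<Rightarrow> real \<Rightarrow> real \<Rightarrow> (real \<times> R3) set" where
  "Hset \<sigma>1 \<sigma>2 r = {(\<sigma>, y). \<sigma>1 \<le> \<sigma> \<and> \<sigma> \<le> \<sigma>2 \<and> norm y \<le> r}"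

end

theory Submission
  imports Defs
begin

lemma cont_param_integral:
  fixes g :: "real \<Rightarrow> R3 \<Rightarrow> real" and w :: "R3 \<Rightarrow> real"
  assumes meas: "\<And>s. s \<in> {a..b} \<Longrightarrow> g s \<in> borel_measurable lebesgue"
    and cx: "\<And>x. continuous_on {a..b} (\<lambda>s. g s x)"
    and bd: "\<And>s x. s \<in> {a..b} \<Longrightarrow> \<bar>g s x\<bar> \<le> w x"
    and w: "integrable lebesgue w"
  shows "continuous_on {a..b} (\<lambda>s. LINT x|lebesgue. g s x)"
proof (rule continuous_on_sequentiallyI)
  fix u :: "nat \<Rightarrow> real" and s0
  assume u: "\<forall>n. u n \<in> {a..b}" and s0: "s0 \<in> {a..b}" and lim: "u \<longlonglongrightarrow> s0"
  show "(\<lambda>n. LINT x|lebesgue. g (u n) x) \<longlonglongrightarrow> (LINT x|lebesgue. g s0 x)"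
  proof (rule integral_dominated_convergence[where w=w])
    show "g s0 \<in> borel_measurable lebesgue" using meas s0 .
    show "\<And>n. g (u n) \<in> borel_measurable lebesgue" using meas u by blast
    show "integrable lebesgue w" by fact
    show "AE x in lebesgue. (\<lambda>n. g (u n) x) \<longlonglongrightarrow> g s0 x"
    proof (rule AE_I2)
      fix x
      have c: "continuous_on {a..b} (\<lambda>s. g s x)" by (rule cx)
      show "(\<lambda>n. g (u n) x) \<longlonglongrightarrow> g s0 x"
        by (rule continuous_on_tendsto_compose[OF c lim s0]) (use u in auto)
    qed
    show "\<And>n. AE x in lebesgue. norm (g (u n) x) \<le> w x"
      using bd u by auto
  qed
qed

lemma odd_integral_zero:
  fixes f :: "R3 \<Rightarrow> R3"
  assumes odd: "\<And>x. f (-x) = - f x" and supp: "\<And>x. norm x \<ge> R \<Longrightarrow> f x = 0"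
  shows "(LINT x|lebesgue. f x) = 0"
proof (cases "integrable lebesgue f")
  case False then show ?thesis by (simp add: not_integrable_integral_eq)
next
  case True
  define I where "I = (LINT x|lebesgue. f x)"
  have hU: "(f has_integral I) UNIV" unfolding I_def by (rule has_integral_integral_lebesgue[OF True])
  define b :: R3 where "b = (\<chi> i. \<bar>R\<bar> + 1)"
  have fe: "(\<lambda>x. if x \<in> cbox (-b) b then f x else 0) = f"
  proof
    fix x show "(if x \<in> cbox (-b) b then f x else 0) = f x"
    proof (cases "x \<in> cbox (-b) b")
      case False
      then obtain i where "\<not> (-b$i \<le> x$i \<and> x$i \<le> b$i)" by (auto simp: mem_box_cart)
      hence "\<bar>x$i\<bar> > \<bar>R\<bar> + 1" by (auto simp: b_def)
      hence "norm x \<ge> R" using component_le_norm_cart[of x i] by linarith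
      then show ?thesis using supp False by simp
    qed simp
  qed
  have h1: "(f has_integral I) (cbox (-b) b)"
    using hU fe has_integral_restrict_UNIV by metis
  have "((\<lambda>x. f (-x)) has_integral I) (cbox (-b) (- (-b)))"
    using has_integral_reflect_lemma[OF h1] by simp
  hence "((\<lambda>x. - f x) has_integral I) (cbox (-b) b)" by (simp add: odd)
  from has_integral_neg[OF this] have "(f has_integral -I) (cbox (-b) b)" by simp
  hence "-I = I" using h1 has_integral_unique by blast
  hence "2 *\<^sub>R I = 0" by (metis scaleR_2 add.right_inverse)
  hence "I = 0" by simp
  thus ?thesis unfolding I_def .
qed

lemma pos_integral:
  fixes u :: "R3 \<Rightarrow> real"
  assumes cu: "continuous_on UNIV u" and x0: "u x0 \<noteq> 0" and int: "integrable lebesgue (\<lambda>x. u x ^ 6)"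
  shows "(LINT x|lebesgue. u x ^ 6) > 0"
proof -
  have ge: "(LINT x|lebesgue. u x ^ 6) \<ge> 0" by (rule Bochner_Integration.integral_nonneg) (simp add: zero_le_even_power)
  show ?thesis
  proof (rule ccontr)
    assume "\<not> ?thesis"
    with ge have "(LINT x|lebesgue. u x ^ 6) = 0" by linarith
    hence ae: "AE x in lebesgue. u x ^ 6 = 0" using integral_nonneg_eq_0_iff_AE[OF int] by simp
    obtain e where e: "e > 0" "\<And>y. dist x0 y < e \<Longrightarrow> u y \<noteq> 0"
      using continuous_on_avoid[OF cu _ x0] by blast
    have "\<exists>N\<in>null_sets lebesgue. {x \<in> space lebesgue. \<not> u x ^ 6 = 0} \<subseteq> N"
      using ae unfolding eventually_ae_filter .
    then obtain N where N: "{x \<in> space lebesgue. \<not> u x ^ 6 = 0} \<subseteq> N" "N \<in> null_sets lebesgue"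
      by blast
    have bN: "ball x0 e \<subseteq> N" using N(1) e(2) by (auto simp: dist_commute)
    have "ball x0 e \<in> null_sets lebesgue"
      by (rule null_sets_subset[OF N(2) fmeasurableD[OF lmeasurable_ball] bN])
    hence "ball x0 e \<in> null_sets lborel" using null_sets_completion_iff[of "ball x0 e" lborel] by simp
    hence "emeasure lborel (ball x0 e) = 0" by (rule null_setsD1)
    moreover have "emeasure lborel (ball x0 e) > 0" using emeasure_ball[of e x0] e unit_ball_vol_pos[of 3] by simp
    ultimately show False by simp
  qed
qed

lemma gamma_scale:
  fixes u :: "R3 \<Rightarrow> real"
  assumes "c \<noteq> 0"
  shows "gamma (\<lambda>x. c * u x) = gamma u"
proof -
  have p: "\<And>x. (c * u x)^6 = c^6 * u x ^ 6" by (simp add: power_mult_distrib)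
  have c6: "c^6 \<noteq> 0" using assms by simp
  have D: "(LINT x|lebesgue. (c * u x)^6) = c^6 * (LINT x|lebesgue. u x ^ 6)" unfolding p by simp
  have V: "(LINT x|lebesgue. (c * u x)^6 *\<^sub>R ((1 / (1 + norm x)) *\<^sub>R x))
      = c^6 *\<^sub>R (LINT x|lebesgue. u x ^ 6 *\<^sub>R ((1 / (1 + norm x)) *\<^sub>R x))"
  proof -
    have "(LINT x|lebesgue. (c * u x)^6 *\<^sub>R ((1 / (1 + norm x)) *\<^sub>R x)) = (LINT x|lebesgue. c^6 *\<^sub>R (u x ^ 6 *\<^sub>R ((1 / (1 + norm x)) *\<^sub>R x)))"
      by (rule Bochner_Integration.integral_cong) (simp_all add: p)
    also have "\<dots> = c^6 *\<^sub>R (LINT x|lebesgue. u x ^ 6 *\<^sub>R ((1 / (1 + norm x)) *\<^sub>R x))"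
      by (rule integral_scaleR_right)
    finally show ?thesis .
  qed
  have b: "beta (\<lambda>x. c * u x) = beta u"
    unfolding beta_def D V using c6 by simp
  have G: "(LINT x|lebesgue. norm ((1 / (1 + norm x)) *\<^sub>R x - beta u) * (c * u x) ^ 6)
     = c^6 * (LINT x|lebesgue. norm ((1 / (1 + norm x)) *\<^sub>R x - beta u) * u x ^ 6)"
  proof -
    have "(\<lambda>x. norm ((1 / (1 + norm x)) *\<^sub>R x - beta u) * (c * u x) ^ 6) = (\<lambda>x. c^6 * (norm ((1 / (1 + norm x)) *\<^sub>R x - beta u) * u x ^ 6))"
      unfolding p by (simp add: algebra_simps)
    thus ?thesis by simp
  qed
  show ?thesis
    unfolding gamma_def b D G using c6 by simp
qed

lemma gamma_zero: "gamma (\<lambda>x. 0 * u x) = 0"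
  unfolding gamma_def by simp

lemma supp_zero:
  fixes \<omega> :: "R3 \<Rightarrow> real"
  assumes "closure {x. \<omega> x \<noteq> 0} \<subseteq> ball 0 1" "norm x \<ge> 1"
  shows "\<omega> x = 0"
proof (rule ccontr)
  assume "\<omega> x \<noteq> 0"
  hence "x \<in> closure {x. \<omega> x \<noteq> 0}" by (meson closure_subset mem_Collect_eq subsetD)
  hence "x \<in> ball 0 1" using assms(1) by blast
  thus False using assms(2) by simp
qed

theorem lemma4p2:
  fixes W K \<omega> :: "R3 \<Rightarrow> real" and cbar rbar \<sigma>1 \<sigma>2 :: real
  assumes W_meas: "W \<in> borel_measurable lebesgue"
    and W_nonneg: "\<And>x. W x \<ge> 0"
    and W_lim: "(W \<longlongrightarrow> 0) at_infinity"
    and W_L32: "integrable lebesgue (\<lambda>x. \<bar>W x\<bar> powr (3/2))"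
    and K_meas: "K \<in> borel_measurable lebesgue"
    and K_nonneg: "\<And>x. K x \<ge> 0"
    and K_nonzero: "\<not> (AE x in lebesgue. K x = 0)"
    and K_lim: "(K \<longlongrightarrow> 0) at_infinity"
    and K_L2: "integrable lebesgue (\<lambda>x. (K x)\<^sup>2)"
    and cbar_low: "1/3 * S_const powr (3/2) < cbar"
    and cbar_up1: "cbar < 1/2 * (B0 W K + 1/3 * S_const powr (3/2))"
    and cbar_up2: "cbar < 1/2 * S_const powr (3/2)"
    and cbar_up3: "(1 + (LINT x|lebesgue. \<bar>W x\<bar> powr (3/2)) powr (2/3) / S_const
                      + (LINT x|lebesgue. (K x)\<^sup>2) / S_const powr (3/2)) ^ 3
                   * (1 + 3 / (4 * S_const) * (LINT x|lebesgue. \<bar>W x\<bar> powr (3/2)) powr (2/3)) < 2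
                   \<Longrightarrow> cbar < 2/3 * S_const powr (3/2) /
                     ((1 + (LINT x|lebesgue. \<bar>W x\<bar> powr (3/2)) powr (2/3) / S_const
                      + (LINT x|lebesgue. (K x)\<^sup>2) / S_const powr (3/2)) ^ 3
                   * (1 + 3 / (4 * S_const) * (LINT x|lebesgue. \<bar>W x\<bar> powr (3/2)) powr (2/3)))"
    and om_smooth: "smooth \<omega>"
    and om_supp: "closure {x. \<omega> x \<noteq> 0} \<subseteq> ball 0 1"
    and om_nonneg: "\<And>x. \<omega> x \<ge> 0"
    and om_Nehari: "\<omega> \<in> Ninf"
    and om_level: "1/3 * S_const powr (3/2) < Iinf \<omega>" "Iinf \<omega> < cbar"
    and om_radial: "\<And>x y. norm x = norm y \<Longrightarrow> \<omega> x = \<omega> y"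
    and om_noninc: "\<And>x y. norm x \<le> norm y \<Longrightarrow> \<omega> y \<le> \<omega> x"
    and rbar_pos: "rbar > 0"
    and sig: "0 < \<sigma>1" "\<sigma>1 < 1/2" "1/2 < \<sigma>2"
    and gam1: "\<And>y. gamma (omega_hat W K \<omega> \<sigma>1 y) < 1/2"
    and gam2: "\<And>y. norm y \<le> rbar \<Longrightarrow> gamma (omega_hat W K \<omega> \<sigma>2 y) > 1/2"
    and sup_bd: "(SUP p\<in>frontier (Hset \<sigma>1 \<sigma>2 rbar). I0 W K (omega_hat W K \<omega> (fst p) (snd p))) < cbar"
  shows "\<exists>\<sigma>t yt \<sigma>b yb. (\<sigma>t, yt) \<in> frontier (Hset \<sigma>1 \<sigma>2 rbar)
            \<and> (\<sigma>b, yb) \<in> interior (Hset \<sigma>1 \<sigma>2 rbar)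
            \<and> beta (omega_sy \<omega> \<sigma>t yt) = 0 \<and> gamma (omega_sy \<omega> \<sigma>t yt) \<ge> 1/2
            \<and> beta (omega_sy \<omega> \<sigma>b yb) = 0 \<and> gamma (omega_sy \<omega> \<sigma>b yb) = 1/2"
proof -
  have om_diff: "\<And>x. \<omega> differentiable (at x)"
    using om_smooth unfolding smooth_def by (metis pds.simps(1))
  have om_cont: "continuous_on UNIV \<omega>"
    by (intro continuous_at_imp_continuous_on ballI differentiable_imp_continuous_within om_diff)
  have om_zero: "\<omega> x = 0" if "norm x \<ge> 1" for x
    by (rule supp_zero[OF om_supp that])
  obtain M where M: "\<And>x. \<bar>\<omega> x\<bar> \<le> M"
  proof -
    have "compact (\<omega> ` cball 0 1)"
      by (rule compact_continuous_image[OF continuous_on_subset[OF om_cont] compact_cball]) auto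
    then obtain B where B: "\<forall>y\<in>\<omega> ` cball 0 1. norm y \<le> B" using compact_imp_bounded bounded_iff by metis
    show ?thesis
    proof (rule that[of "max B 0"])
      fix x show "\<bar>\<omega> x\<bar> \<le> max B 0"
      proof (cases "norm x \<ge> 1")
        case True then show ?thesis using om_zero by simp
      next
        case False then have "x \<in> cball 0 1" by simp
        hence "\<bar>\<omega> x\<bar> \<le> B" using B by auto
        thus ?thesis by simp
      qed
    qed
  qed
  have M0: "M \<ge> 0" using M[of 0] by linarith
  obtain z0 where z0: "\<omega> z0 \<noteq> 0"
  proof -
    have "nonzero \<omega>" using om_Nehari unfolding Ninf_def by simp
    hence "\<not> (\<forall>x. \<omega> x = 0)" unfolding nonzero_def by auto
    thus ?thesis using that by blast
  qed
  define u where "u = (\<lambda>s x. omega_sy \<omega> s 0 x)"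
  have u_eq: "u s x = s powr (-1/2) * \<omega> ((1/s) *\<^sub>R x)" if "s > 0" for s x
  proof (cases "x \<in> ball 0 s")
    case True then show ?thesis unfolding u_def omega_sy_def by simp
  next
    case False
    hence "norm x \<ge> s" by simp
    hence "norm ((1/s) *\<^sub>R x) \<ge> 1" using that by (simp add: field_simps)
    then show ?thesis using False om_zero unfolding u_def omega_sy_def by simp
  qed
  have u_supp: "u s x = 0" if "norm x \<ge> s" for s x
    using that unfolding u_def omega_sy_def by simp
  have u_cont: "continuous_on UNIV (u s)" if "s > 0" for s
  proof -
    have "continuous_on UNIV (\<lambda>x. s powr (-1/2) * \<omega> ((1/s) *\<^sub>R x))"
      by (intro continuous_intros continuous_on_compose2[OF om_cont]) auto
    moreover have "u s = (\<lambda>x. s powr (-1/2) * \<omega> ((1/s) *\<^sub>R x))" using u_eq that by auto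
    ultimately show ?thesis by simp
  qed
  have u_meas: "u s \<in> borel_measurable lebesgue" if "s > 0" for s
    using u_cont[OF that] by (simp add: borel_measurable_continuous_onI measurable_completion)
  have u_sc: "continuous_on {\<sigma>1..\<sigma>2} (\<lambda>s. u s x)" for x
  proof -
    have "continuous_on {\<sigma>1..\<sigma>2} (\<lambda>s. s powr (-1/2) * \<omega> ((1/s) *\<^sub>R x))"
      using sig by (intro continuous_intros continuous_on_compose2[OF om_cont]) auto
    thus ?thesis by (rule continuous_on_cong[THEN iffD1, rotated 2]) (use u_eq sig in auto)
  qed
  have u_rad: "u s (-x) = u s x" for s x
    unfolding u_def omega_sy_def by (auto intro: om_radial)
  define C where "C = \<sigma>1 powr (-1/2) * M"
  define w where "w = (\<lambda>x::R3. C ^ 6 * indicator (cball 0 \<sigma>2) x :: real)"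
  have w_int: "integrable lebesgue w"
  proof -
    have "integrable lebesgue (indicat_real (cball (0::R3) \<sigma>2))"
      using lmeasurable_cball lmeasurable_iff_integrable by blast
    thus ?thesis unfolding w_def by simp
  qed
  have u_bd: "\<bar>u s x\<bar> ^ 6 \<le> w x" if "s \<in> {\<sigma>1..\<sigma>2}" for s x
  proof (cases "norm x \<ge> s")
    case True then show ?thesis using u_supp unfolding w_def by (simp add: indicator_def)
  next
    case False
    hence xc: "x \<in> cball 0 \<sigma>2" using that by auto
    have s0: "s > 0" using that sig by auto
    have "s powr (-1/2) \<le> \<sigma>1 powr (-1/2)" by (rule powr_mono2') (use that sig in auto)
    hence "\<bar>u s x\<bar> \<le> C" unfolding C_def u_eq[OF s0] abs_mult
      using M[of "(1/s) *\<^sub>R x"] M0 by (simp add: mult_mono)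
    hence "\<bar>u s x\<bar> ^ 6 \<le> C ^ 6" by (rule power_mono) simp
    thus ?thesis unfolding w_def using xc by simp
  qed
  define D where "D = (\<lambda>s. LINT x|lebesgue. (u s x) ^ 6)"
  define N where "N = (\<lambda>s. LINT x|lebesgue. norm ((1 / (1 + norm x)) *\<^sub>R x) * (u s x) ^ 6)"
  have nb: "norm ((1 / (1 + norm x)) *\<^sub>R x) = norm x / (1 + norm x)" for x :: R3
    by simp
  have nb1: "norm ((1 / (1 + norm x)) *\<^sub>R x) \<le> 1" for x :: R3
  proof -
    have pos: "0 < 1 + norm x" using norm_ge_zero[of x] by linarith
    show ?thesis unfolding nb using pos by (simp add: pos_divide_le_eq)
  qed
  have D_cont: "continuous_on {\<sigma>1..\<sigma>2} D"
    unfolding D_def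
  proof (rule cont_param_integral[where w=w])
    show "\<And>s. s \<in> {\<sigma>1..\<sigma>2} \<Longrightarrow> (\<lambda>x. u s x ^ 6) \<in> borel_measurable lebesgue"
      using u_meas sig by auto
    show "\<And>x. continuous_on {\<sigma>1..\<sigma>2} (\<lambda>s. u s x ^ 6)"
      using u_sc by (intro continuous_intros)
    show "\<And>s x. s \<in> {\<sigma>1..\<sigma>2} \<Longrightarrow> \<bar>u s x ^ 6\<bar> \<le> w x"
      using u_bd by (simp add: power_abs)
  qed fact
  have N_bd: "\<bar>norm ((1 / (1 + norm x)) *\<^sub>R x) * u s x ^ 6\<bar> \<le> w x" if "s \<in> {\<sigma>1..\<sigma>2}" for s x
  proof -
    have "\<bar>norm ((1 / (1 + norm x)) *\<^sub>R x) * u s x ^ 6\<bar> \<le> 1 * \<bar>u s x\<bar> ^ 6"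
      unfolding abs_mult power_abs by (rule mult_right_mono) (use nb1 in auto)
    thus ?thesis using u_bd[OF that, of x] by simp
  qed
  have N_meas: "(\<lambda>x. norm ((1 / (1 + norm x)) *\<^sub>R x) * u s x ^ 6) \<in> borel_measurable lebesgue" if "s > 0" for s
  proof -
    have "continuous_on UNIV (\<lambda>x::R3. norm ((1 / (1 + norm x)) *\<^sub>R x))"
      by (intro continuous_intros) (auto simp: add_nonneg_eq_0_iff)
    hence "(\<lambda>x::R3. norm ((1 / (1 + norm x)) *\<^sub>R x)) \<in> borel_measurable lebesgue"
      by (simp add: borel_measurable_continuous_onI measurable_completion)
    thus ?thesis using u_meas[OF that] by measurable
  qed
  have N_cont: "continuous_on {\<sigma>1..\<sigma>2} N"
    unfolding N_def
  proof (rule cont_param_integral[where w=w])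
    show "\<And>s. s \<in> {\<sigma>1..\<sigma>2} \<Longrightarrow> (\<lambda>x. norm ((1 / (1 + norm x)) *\<^sub>R x) * u s x ^ 6) \<in> borel_measurable lebesgue"
      using N_meas sig by auto
    show "\<And>x. continuous_on {\<sigma>1..\<sigma>2} (\<lambda>s. norm ((1 / (1 + norm x)) *\<^sub>R x) * u s x ^ 6)"
      using u_sc by (intro continuous_intros)
    show "\<And>s x. s \<in> {\<sigma>1..\<sigma>2} \<Longrightarrow> \<bar>norm ((1 / (1 + norm x)) *\<^sub>R x) * u s x ^ 6\<bar> \<le> w x"
      using N_bd by blast
  qed fact
  have D_int: "integrable lebesgue (\<lambda>x. u s x ^ 6)" if "s \<in> {\<sigma>1..\<sigma>2}" for s
    by (rule Bochner_Integration.integrable_bound[OF w_int]) (use u_meas u_bd that sig in \<open>auto simp: power_abs w_def\<close>)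
  have N_int: "integrable lebesgue (\<lambda>x. norm ((1 / (1 + norm x)) *\<^sub>R x) * u s x ^ 6)" if "s \<in> {\<sigma>1..\<sigma>2}" for s
    by (rule Bochner_Integration.integrable_bound[OF w_int]) (use N_meas N_bd that sig in \<open>auto simp: w_def\<close>)
  have D_pos: "D s > 0" if "s \<in> {\<sigma>1..\<sigma>2}" for s
  proof -
    have s0: "s > 0" using that sig by auto
    have "u s (s *\<^sub>R z0) \<noteq> 0" using u_eq[OF s0] s0 z0 by simp
    thus ?thesis unfolding D_def using pos_integral[OF u_cont[OF s0] _ D_int[OF that]] by blast
  qed
  have beta0: "beta (u s) = 0" if "s > 0" for s
  proof -
    have "(LINT x|lebesgue. (u s x ^ 6) *\<^sub>R ((1 / (1 + norm x)) *\<^sub>R x)) = 0"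
      by (rule odd_integral_zero[where R=s]) (auto simp: u_rad u_supp)
    thus ?thesis unfolding beta_def by simp
  qed
  have gam_eq: "gamma (u s) = N s / D s" if "s > 0" for s
    unfolding gamma_def beta0[OF that] N_def D_def by simp
  define f where "f = (\<lambda>s. N s / D s)"
  have f_cont: "continuous_on {\<sigma>1..\<sigma>2} f"
  proof -
    have Dnz: "\<forall>s\<in>{\<sigma>1..\<sigma>2}. D s \<noteq> 0" using D_pos by (metis less_irrefl)
    show ?thesis unfolding f_def by (rule continuous_on_divide[OF N_cont D_cont]) (use Dnz in blast)
  qed
  have s1in: "\<sigma>1 \<in> {\<sigma>1..\<sigma>2}" and s2in: "\<sigma>2 \<in> {\<sigma>1..\<sigma>2}" using sig by auto
  have f1: "f \<sigma>1 < 1/2"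
  proof -
    have "N \<sigma>1 \<le> (LINT x|lebesgue. \<sigma>1 * u \<sigma>1 x ^ 6)"
      unfolding N_def
    proof (rule integral_mono[OF N_int[OF s1in]])
      show "integrable lebesgue (\<lambda>x. \<sigma>1 * u \<sigma>1 x ^ 6)" using D_int[OF s1in] by simp
      fix x
      show "norm ((1 / (1 + norm x)) *\<^sub>R x) * u \<sigma>1 x ^ 6 \<le> \<sigma>1 * u \<sigma>1 x ^ 6"
      proof (cases "norm x \<ge> \<sigma>1")
        case True then show ?thesis using u_supp by simp
      next
        case False
        have pos: "0 < 1 + norm x" using norm_ge_zero[of x] by linarith
        have "norm x / (1 + norm x) \<le> norm x / 1"
          by (rule divide_left_mono) (use pos in auto)
        hence "norm x / (1 + norm x) \<le> norm x" by simp
        hence "norm ((1 / (1 + norm x)) *\<^sub>R x) \<le> \<sigma>1" using False unfolding nb by linarith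
        then show ?thesis by (rule mult_right_mono) (simp add: zero_le_even_power)
      qed
    qed
    also have "\<dots> = \<sigma>1 * D \<sigma>1" unfolding D_def by simp
    finally have "N \<sigma>1 / D \<sigma>1 \<le> \<sigma>1" using D_pos[OF s1in] by (simp add: divide_le_eq)
    thus ?thesis unfolding f_def using sig by linarith
  qed
  define T where "T = (THE t. t > 0 \<and> (\<lambda>z. t * omega_sy \<omega> \<sigma>2 0 z) \<in> N0 W K)"
  have oh: "omega_hat W K \<omega> \<sigma>2 0 = (\<lambda>x. T * u \<sigma>2 x)"
    unfolding omega_hat_def T_def u_def by (rule ext) simp
  have g2: "gamma (omega_hat W K \<omega> \<sigma>2 0) > 1/2" using gam2[of 0] rbar_pos by simp
  have T0: "T \<noteq> 0"
  proof
    assume "T = 0"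
    hence "gamma (omega_hat W K \<omega> \<sigma>2 0) = 0" unfolding oh using gamma_zero by simp
    with g2 show False by simp
  qed
  have gu2: "gamma (u \<sigma>2) > 1/2" using g2 unfolding oh gamma_scale[OF T0] .
  have f2: "f \<sigma>2 > 1/2" using gu2 gam_eq[of \<sigma>2] sig unfolding f_def by simp
  obtain sb where sb: "\<sigma>1 \<le> sb" "sb \<le> \<sigma>2" "f sb = 1/2"
    using IVT'[of f \<sigma>1 "1/2" \<sigma>2] f1 f2 f_cont sig by auto
  have sb': "\<sigma>1 < sb" "sb < \<sigma>2" using sb f1 f2 by (auto simp: order_le_less)
  have H: "Hset \<sigma>1 \<sigma>2 rbar = {\<sigma>1..\<sigma>2} \<times> cball 0 rbar" unfolding Hset_def by auto
  have intH: "interior (Hset \<sigma>1 \<sigma>2 rbar) = {\<sigma>1<..<\<sigma>2} \<times> ball 0 rbar"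
    unfolding H interior_Times by simp
  have frH: "frontier (Hset \<sigma>1 \<sigma>2 rbar) = {\<sigma>1..\<sigma>2} \<times> cball 0 rbar - {\<sigma>1<..<\<sigma>2} \<times> ball 0 rbar"
    unfolding frontier_def intH unfolding H closure_Times by simp
  show ?thesis
  proof (intro exI conjI)
    show "(\<sigma>2, 0) \<in> frontier (Hset \<sigma>1 \<sigma>2 rbar)" unfolding frH using sig rbar_pos by auto
    show "(sb, 0) \<in> interior (Hset \<sigma>1 \<sigma>2 rbar)" unfolding intH using sb' rbar_pos by auto
    show "beta (omega_sy \<omega> \<sigma>2 0) = 0" using beta0[of \<sigma>2] sig unfolding u_def by simp
    show "gamma (omega_sy \<omega> \<sigma>2 0) \<ge> 1/2" using gu2 unfolding u_def by simp
    show "beta (omega_sy \<omega> sb 0) = 0" using beta0[of sb] sb' sig unfolding u_def by simp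
    show "gamma (omega_sy \<omega> sb 0) = 1/2" using gam_eq[of sb] sb sb' sig unfolding f_def u_def by simp
  qed
qed

end
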